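(* Let $T$ be a labeled tree with an even number of vertices whose bipartition $V(T)=A\sqcup B$ into two independent sets satisfies $|A|\ne|B|$. Then $X(T;\mathbf{x},q)$ is not palindromic; in particular it is not symmetric.
   Context: A labeled graph is a finite simple graph with vertex set $[n]$. A proper coloring is $c\colon[n]\to\{1,2,\dots\}$ with adjacent vertices colored differently; $\operatorname{asc}(c)=\#\{ij\in E: i<j,\ c(i)<c(j)\}$. The CQF is $X(G;\mathbf{x},q)=\sum_{c \text{ proper}} x_{c(1)}\cdots x_{c(n)}q^{\operatorname{asc}(c)}$. It is symmetric if each coefficient of $q^k$ is a symmetric function, and palindromic if, with $m=|E|$, the coefficient of $q^k$ equals that of $q^{m-k}$ for all $k$. *)

theory Defs
  imports Main "HOL-Library.FuncSet"
begin

definition simple_graph :: "nat \<Rightarrow> nat set set \<Rightarrow> bool" where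
  "simple_graph n E \<longleftrightarrow>
     (\<forall>e\<in>E. \<exists>i j. e = {i, j} \<and> i \<noteq> j \<and> i \<in> {1..n} \<and> j \<in> {1..n})"

definition adj :: "nat set set \<Rightarrow> nat \<Rightarrow> nat \<Rightarrow> bool" where
  "adj E i j \<longleftrightarrow> i \<noteq> j \<and> {i, j} \<in> E"

definition graph_connected :: "nat \<Rightarrow> nat set set \<Rightarrow> bool" where
  "graph_connected n E \<longleftrightarrow>
     (\<forall>i\<in>{1..n}. \<forall>j\<in>{1..n}. (i, j) \<in> {(a, b). adj E a b}\<^sup>*)"

definition has_cycle :: "nat \<Rightarrow> nat set set \<Rightarrow> bool" where
  "has_cycle n E \<longleftrightarrow>
     (\<exists>vs. length vs \<ge> 3 \<and> distinct vs \<and> set vs \<subseteq> {1..n} \<and>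
        (\<forall>i. i + 1 < length vs \<longrightarrow> adj E (vs ! i) (vs ! (i + 1))) \<and>
        adj E (last vs) (hd vs))"

definition is_tree :: "nat \<Rightarrow> nat set set \<Rightarrow> bool" where
  "is_tree n E \<longleftrightarrow> simple_graph n E \<and> n \<ge> 1 \<and> graph_connected n E \<and> \<not> has_cycle n E"

definition independent_set :: "nat set set \<Rightarrow> nat set \<Rightarrow> bool" where
  "independent_set E S \<longleftrightarrow> (\<forall>i\<in>S. \<forall>j\<in>S. \<not> adj E i j)"

definition proper_coloring :: "nat \<Rightarrow> nat set set \<Rightarrow> (nat \<Rightarrow> nat) \<Rightarrow> bool" where
  "proper_coloring n E c \<longleftrightarrow>
     c \<in> {1..n} \<rightarrow>\<^sub>E {1..} \<and> (\<forall>i j. adj E i j \<longrightarrow> c i \<noteq> c j)"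

definition asc :: "nat set set \<Rightarrow> (nat \<Rightarrow> nat) \<Rightarrow> nat" where
  "asc E c = card {(i, j). {i, j} \<in> E \<and> i < j \<and> c i < c j}"

text \<open>Exponent of x_a in the monomial x_{c(1)}...x_{c(n)}.\<close>
definition content :: "nat \<Rightarrow> (nat \<Rightarrow> nat) \<Rightarrow> nat \<Rightarrow> nat" where
  "content n c a = card {i \<in> {1..n}. c i = a}"

text \<open>Coefficient of q^k x^\<alpha> in X(G;x,q), where \<alpha> gives the exponent of each variable x_a (a \<ge> 1).\<close>
definition cqf_coeff :: "nat \<Rightarrow> nat set set \<Rightarrow> nat \<Rightarrow> (nat \<Rightarrow> nat) \<Rightarrow> nat" where
  "cqf_coeff n E k \<alpha> =
     card {c. proper_coloring n E c \<and> asc E c = k \<and> content n c = \<alpha>}"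

text \<open>Each coefficient of q^k is a symmetric function: invariant under any permutation of the variables x_1, x_2, ...\<close>
definition cqf_symmetric :: "nat \<Rightarrow> nat set set \<Rightarrow> bool" where
  "cqf_symmetric n E \<longleftrightarrow>
     (\<forall>k \<alpha> \<sigma>. bij \<sigma> \<and> \<sigma> 0 = 0 \<longrightarrow> cqf_coeff n E k (\<alpha> \<circ> \<sigma>) = cqf_coeff n E k \<alpha>)"

definition cqf_palindromic :: "nat \<Rightarrow> nat set set \<Rightarrow> bool" where
  "cqf_palindromic n E \<longleftrightarrow>
     (\<forall>k \<le> card E. \<forall>\<alpha>. cqf_coeff n E k \<alpha> = cqf_coeff n E (card E - k) \<alpha>)"

end

theory Submission imports Defs begin

definition cyc :: "nat set set \<Rightarrow> bool" where
  "cyc E \<longleftrightarrow> (\<exists>vs. length vs \<ge> 3 \<and> distinct vs \<and>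
     (\<forall>i. i + 1 < length vs \<longrightarrow> adj E (vs ! i) (vs ! (i + 1))) \<and> adj E (last vs) (hd vs))"

definition gpath :: "nat set set \<Rightarrow> nat list \<Rightarrow> bool" where
  "gpath E vs \<longleftrightarrow> distinct vs \<and> (\<forall>i. i + 1 < length vs \<longrightarrow> adj E (vs ! i) (vs ! (i + 1)))"

definition edges_in :: "nat set \<Rightarrow> nat set set \<Rightarrow> bool" where
  "edges_in V E \<longleftrightarrow> (\<forall>e\<in>E. \<exists>i j. e = {i, j} \<and> i \<noteq> j \<and> i \<in> V \<and> j \<in> V)"

definition conn :: "nat set \<Rightarrow> nat set set \<Rightarrow> bool" where
  "conn V E \<longleftrightarrow> (\<forall>i\<in>V. \<forall>j\<in>V. (i, j) \<in> {(a, b). adj E a b}\<^sup>*)"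

lemma adj_sym: "adj E a b \<Longrightarrow> adj E b a"
  unfolding adj_def by (auto simp: insert_commute)

lemma adj_in: "edges_in V E \<Longrightarrow> adj E a b \<Longrightarrow> a \<in> V \<and> b \<in> V"
  unfolding edges_in_def adj_def by (fastforce simp: doubleton_eq_iff)

lemma leaf_exists:
  assumes fin: "finite V" and ei: "edges_in V E" and ne: "E \<noteq> {}" and nc: "\<not> cyc E"
  shows "\<exists>v u. v \<in> V \<and> adj E v u \<and> (\<forall>w. adj E v w \<longrightarrow> w = u)"
proof -
  define S where "S = {vs. gpath E vs \<and> set vs \<subseteq> V}"
  have "S \<subseteq> {xs. set xs \<subseteq> V \<and> length xs \<le> card V}"
    unfolding S_def gpath_def using fin by (auto, metis card_mono distinct_card card_set)
  hence finS: "finite S" using finite_lists_length_le[OF fin] finite_subset by blast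
  obtain e where "e \<in> E" using ne by blast
  then obtain a b where ab: "e = {a,b}" "a \<noteq> b" "a \<in> V" "b \<in> V" using ei unfolding edges_in_def by blast
  have "adj E a b" using ab \<open>e \<in> E\<close> unfolding adj_def by auto
  hence "[a,b] \<in> S" unfolding S_def gpath_def using ab by auto
  define L where "L = Max (length ` S)"
  have Lb: "length vs \<le> L" if "vs \<in> S" for vs using finS that unfolding L_def by auto
  have "L \<in> length ` S" unfolding L_def using finS \<open>[a,b] \<in> S\<close> by (intro Max_in) auto
  then obtain ps where ps: "ps \<in> S" "length ps = L" by auto
  have "L \<ge> 2" using Lb[OF \<open>[a,b] \<in> S\<close>] by simp
  have dps: "distinct ps" and aps: "\<And>i. i + 1 < length ps \<Longrightarrow> adj E (ps ! i) (ps ! (i + 1))"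
    using ps(1) unfolding S_def gpath_def by auto
  define v where "v = last ps"
  define u where "u = ps ! (length ps - 2)"
  have lastv: "ps ! (length ps - 1) = v" unfolding v_def using ps \<open>L \<ge> 2\<close>
    by (metis last_conv_nth list.size(3) not_numeral_le_zero)
  have "length ps - 2 + 1 < length ps" "length ps - 2 + 1 = length ps - 1" using ps \<open>L \<ge> 2\<close> by auto
  hence "adj E u v" using aps[of "length ps - 2"] lastv unfolding u_def by metis
  hence vu: "adj E v u" by (rule adj_sym)
  have vV: "v \<in> V" using adj_in[OF ei vu] by simp
  have "\<forall>w. adj E v w \<longrightarrow> w = u"
  proof (intro allI impI)
    fix w assume vw: "adj E v w"
    show "w = u"
    proof (cases "w \<in> set ps")
      case False
      have "ps @ [w] \<in> S"
        unfolding S_def gpath_def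
      proof (intro CollectI conjI allI impI)
        show "distinct (ps @ [w])" using dps False by simp
        show "set (ps @ [w]) \<subseteq> V" using ps(1) adj_in[OF ei vw] unfolding S_def by auto
        fix i assume i: "i + 1 < length (ps @ [w])"
        show "adj E ((ps @ [w]) ! i) ((ps @ [w]) ! (i + 1))"
        proof (cases "i + 1 < length ps")
          case True then show ?thesis using aps[OF True] by (simp add: nth_append)
        next
          case False
          hence "i = length ps - 1" "i < length ps" using i by auto
          then show ?thesis using vw lastv by (auto simp: nth_append)
        qed
      qed
      thus ?thesis using Lb ps by fastforce
    next
      case True
      then obtain i where i: "i < length ps" "ps ! i = w" by (auto simp: in_set_conv_nth)
      have "w \<noteq> v" using vw unfolding adj_def by auto
      hence "i \<noteq> length ps - 1" using i lastv by auto
      show ?thesis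
      proof (cases "i = length ps - 2")
        case True then show ?thesis using i u_def by simp
      next
        case False
        hence ilt: "i + 3 \<le> length ps" using i \<open>i \<noteq> length ps - 1\<close> by linarith
        have "cyc E" unfolding cyc_def
        proof (intro exI conjI allI impI)
          show "3 \<le> length (drop i ps)" using ilt by simp
          show "distinct (drop i ps)" using dps by simp
          fix j assume "j + 1 < length (drop i ps)"
          thus "adj E (drop i ps ! j) (drop i ps ! (j + 1))" using aps[of "i + j"] by (simp add: add.assoc)
        next
          show "adj E (last (drop i ps)) (hd (drop i ps))"
            using i vw by (simp add: hd_drop_conv_nth v_def)
        qed
        thus ?thesis using nc by simp
      qed
    qed
  qed
  thus ?thesis using vV vu by blast
qed


lemma tree_card_aux:
  "card V = n \<Longrightarrow> finite V \<Longrightarrow> V \<noteq> {} \<Longrightarrow> edges_in V E \<Longrightarrow> conn V E \<Longrightarrow> \<not> cyc E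
   \<Longrightarrow> card E = card V - 1"
proof (induction n arbitrary: V E)
  case 0 then show ?case by simp
next
  case (Suc n)
  show ?case
  proof (cases "n = 0")
    case True
    then obtain x where "V = {x}" using Suc.prems(1) card_1_singletonE by auto
    hence "E = {}" using Suc.prems(4) unfolding edges_in_def by auto
    thus ?thesis using Suc.prems(1) True by simp
  next
    case False
    obtain a where a: "a \<in> V" using Suc.prems by blast
    have "card (V - {a}) = n" using Suc.prems a by simp
    have "V - {a} \<noteq> {}"
    proof
      assume "V - {a} = {}"
      hence "card (V - {a}) = 0" by (simp only: card.empty)
      thus False using \<open>card (V - {a}) = n\<close> False by simp
    qed
    then obtain b where b: "b \<in> V" "b \<noteq> a" by blast
    have "(a, b) \<in> {(x, y). adj E x y}\<^sup>*" using Suc.prems(5) a b unfolding conn_def by blast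
    then obtain y where "adj E a y" using b(2) by (auto elim: converse_rtranclE)
    hence "E \<noteq> {}" unfolding adj_def by auto
    from leaf_exists[OF Suc.prems(2,4) this Suc.prems(6)]
    obtain v u where vu: "v \<in> V" "adj E v u" "\<And>w. adj E v w \<Longrightarrow> w = u" by blast
    have uV: "u \<in> V" using adj_in[OF Suc.prems(4) vu(2)] by simp
    have uv: "u \<noteq> v" using vu(2) unfolding adj_def by auto
    have uvE: "{u, v} \<in> E" using vu(2) unfolding adj_def by (simp add: insert_commute)
    define V' where "V' = V - {v}"
    define E' where "E' = E - {{u, v}}"
    have cV': "card V' = n" using Suc.prems vu unfolding V'_def by simp
    have ne': "V' \<noteq> {}" using uV uv unfolding V'_def by auto
    have ei': "edges_in V' E'" unfolding edges_in_def
    proof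
      fix e assume e: "e \<in> E'"
      then obtain i j where ij: "e = {i,j}" "i \<noteq> j" "i \<in> V" "j \<in> V"
        using Suc.prems(4) unfolding E'_def edges_in_def by blast
      have "i \<noteq> v"
      proof
        assume "i = v"
        hence "adj E v j" using e ij unfolding E'_def adj_def by auto
        hence "j = u" using vu(3) by blast
        thus False using e ij \<open>i = v\<close> unfolding E'_def by (auto simp: insert_commute)
      qed
      moreover have "j \<noteq> v"
      proof
        assume "j = v"
        hence "adj E v i" using e ij unfolding E'_def adj_def by (auto simp: insert_commute)
        hence "i = u" using vu(3) by blast
        thus False using e ij \<open>j = v\<close> unfolding E'_def by (auto simp: insert_commute)
      qed
      ultimately show "\<exists>i j. e = {i, j} \<and> i \<noteq> j \<and> i \<in> V' \<and> j \<in> V'" using ij unfolding V'_def by blast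
    qed
    have adjE': "adj E' x y" if "adj E x y" "x \<noteq> v" "y \<noteq> v" for x y
      using that unfolding adj_def E'_def by (auto simp: doubleton_eq_iff)
    have conn': "conn V' E'" unfolding conn_def
    proof (intro ballI)
      fix i j assume i: "i \<in> V'" and j: "j \<in> V'"
      have iv: "i \<noteq> v" using i unfolding V'_def by auto
      have key: "(b = v \<longrightarrow> (i, u) \<in> {(x, y). adj E' x y}\<^sup>*) \<and> (b \<noteq> v \<longrightarrow> (i, b) \<in> {(x, y). adj E' x y}\<^sup>*)"
        if "(i, b) \<in> {(x, y). adj E x y}\<^sup>*" for b
        using that
      proof (induction rule: rtrancl_induct)
        case base then show ?case using iv by simp
      next
        case (step b b')
        hence st: "adj E b b'" by simp
        show ?case
        proof (cases "b = v")
          case True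
          hence "b' = u" using vu(3) st by blast
          thus ?thesis using step.IH True uv by simp
        next
          case False
          show ?thesis
          proof (cases "b' = v")
            case True
            hence "b = u" using vu(3) adj_sym[OF st] by blast
            thus ?thesis using step.IH False True by simp
          next
            case False2: False
            have "adj E' b b'" using adjE'[OF st False False2] .
            thus ?thesis using step.IH False False2 by (simp add: rtrancl.rtrancl_into_rtrancl)
          qed
        qed
      qed
      have "(i, j) \<in> {(x, y). adj E x y}\<^sup>*" using Suc.prems(5) i j unfolding conn_def V'_def by blast
      thus "(i, j) \<in> {(x, y). adj E' x y}\<^sup>*" using key j unfolding V'_def by blast
    qed
    have nc': "\<not> cyc E'"
    proof
      assume "cyc E'"
      moreover have "adj E' x y \<Longrightarrow> adj E x y" for x y unfolding adj_def E'_def by auto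
      ultimately have "cyc E" unfolding cyc_def by meson
      thus False using Suc.prems(6) by simp
    qed
    have IH: "card E' = card V' - 1"
      using Suc.IH[OF cV' _ ne' ei' conn' nc'] Suc.prems(2) unfolding V'_def by simp
    have "E \<subseteq> Pow V" using Suc.prems(4) unfolding edges_in_def by auto
    hence "finite E" using Suc.prems(2) by (meson finite_Pow_iff finite_subset)
    hence "card E' = card E - 1" unfolding E'_def using uvE by simp
    moreover have "card E \<ge> 1" using \<open>finite E\<close> uvE by (metis card_0_eq empty_iff less_one not_le)
    ultimately show ?thesis using IH cV' Suc.prems(1) \<open>n \<noteq> 0\<close> by simp
  qed
qed

lemma tree_card:
  assumes "is_tree n E" shows "card E = n - 1"
proof -
  have ei: "edges_in {1..n} E" using assms unfolding is_tree_def simple_graph_def edges_in_def by blast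
  have cn: "conn {1..n} E" using assms unfolding is_tree_def graph_connected_def conn_def by blast
  have nc: "\<not> cyc E"
  proof
    assume "cyc E"
    then obtain vs where vs: "length vs \<ge> 3" "distinct vs"
      "\<forall>i. i + 1 < length vs \<longrightarrow> adj E (vs ! i) (vs ! (i + 1))" "adj E (last vs) (hd vs)"
      unfolding cyc_def by blast
    have "set vs \<subseteq> {1..n}"
    proof
      fix x assume "x \<in> set vs"
      then obtain i where i: "i < length vs" "vs ! i = x" by (auto simp: in_set_conv_nth)
      show "x \<in> {1..n}"
      proof (cases "i + 1 < length vs")
        case True then show ?thesis using vs(3) adj_in[OF ei] i by blast
      next
        case False
        hence "i = length vs - 1" using i by simp
        moreover have "vs \<noteq> []" using i by auto
        hence "last vs = vs ! (length vs - 1)" by (rule last_conv_nth)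
        ultimately have "x = last vs" using i by simp
        thus ?thesis using vs(4) adj_in[OF ei] by blast
      qed
    qed
    hence "has_cycle n E" unfolding has_cycle_def using vs by blast
    thus False using assms unfolding is_tree_def by simp
  qed
  have "n \<ge> 1" using assms unfolding is_tree_def by simp
  thus ?thesis using tree_card_aux[OF refl _ _ ei cn nc] by simp
qed


lemma uniq_col:
  assumes cn: "graph_connected n E" and n1: "n \<ge> 1"
    and adjN: "\<And>i j. adj E i j \<Longrightarrow> i \<in> {1..n} \<and> j \<in> {1..n}"
    and p0: "proper_coloring n E c0" and v0: "\<forall>i\<in>{1..n}. c0 i \<in> {1,2}"
    and d0: "content n c0 1 \<noteq> content n c0 2"
    and p: "proper_coloring n E c" and ct: "content n c = content n c0"
  shows "c = c0"
proof -
  let ?N = "{1..n::nat}"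
  have s0: "content n c0 1 + content n c0 2 = n"
  proof -
    have "{i\<in>?N. c0 i = 1} \<union> {i\<in>?N. c0 i = 2} = ?N" using v0 by auto
    moreover have "card ({i\<in>?N. c0 i = 1} \<union> {i\<in>?N. c0 i = 2}) = card {i\<in>?N. c0 i = 1} + card {i\<in>?N. c0 i = 2}"
      by (rule card_Un_disjoint) auto
    ultimately show ?thesis unfolding content_def by simp
  qed
  have v: "\<forall>i\<in>?N. c i \<in> {1,2}"
  proof -
    have "card ({i\<in>?N. c i = 1} \<union> {i\<in>?N. c i = 2}) = card {i\<in>?N. c i = 1} + card {i\<in>?N. c i = 2}"
      by (rule card_Un_disjoint) auto
    also have "\<dots> = n" using s0 ct unfolding content_def by metis
    finally have "{i\<in>?N. c i = 1} \<union> {i\<in>?N. c i = 2} = ?N"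
      by (intro card_subset_eq) auto
    thus ?thesis by blast
  qed
  have cA: "c \<in> ?N \<rightarrow>\<^sub>E {1..} " "\<And>i j. adj E i j \<Longrightarrow> c i \<noteq> c j" using p unfolding proper_coloring_def by auto
  have c0A: "c0 \<in> ?N \<rightarrow>\<^sub>E {1..} " "\<And>i j. adj E i j \<Longrightarrow> c0 i \<noteq> c0 j" using p0 unfolding proper_coloring_def by auto
  have prp: "(c j = c0 j) = (c 1 = c0 1)" if "(1, j) \<in> {(a, b). adj E a b}\<^sup>*" for j
    using that
  proof (induction rule: rtrancl_induct)
    case base then show ?case by simp
  next
    case (step b b')
    hence ab: "adj E b b'" by simp
    have "b \<in> ?N" "b' \<in> ?N" using adjN[OF ab] by auto
    hence "c b \<in> {1,2}" "c b' \<in> {1,2}" "c0 b \<in> {1,2}" "c0 b' \<in> {1,2}" using v v0 by auto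
    moreover have "c b \<noteq> c b'" "c0 b \<noteq> c0 b'" using cA(2) c0A(2) ab by auto
    ultimately have "(c b' = c0 b') = (c b = c0 b)" by auto
    thus ?case using step.IH by simp
  qed
  have conn1: "(1, j) \<in> {(a, b). adj E a b}\<^sup>*" if "j \<in> ?N" for j
    using cn that n1 unfolding graph_connected_def by auto
  show ?thesis
  proof (cases "c 1 = c0 1")
    case True
    have "\<forall>j\<in>?N. c j = c0 j" using prp conn1 True by blast
    moreover have "\<forall>j. j \<notin> ?N \<longrightarrow> c j = c0 j" using cA(1) c0A(1) by (auto simp: PiE_def extensional_def)
    ultimately show ?thesis by (intro ext) metis
  next
    case False
    have "\<forall>j\<in>?N. c j \<noteq> c0 j" using prp conn1 False by blast
    hence "{i\<in>?N. c i = 1} = {i\<in>?N. c0 i = 2}" using v v0 by fastforce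
    hence "content n c 1 = content n c0 2" unfolding content_def by simp
    thus ?thesis using ct d0 by simp
  qed
qed

lemma coeff_single:
  assumes "\<And>c. proper_coloring n E c \<Longrightarrow> content n c = content n c0 \<Longrightarrow> c = c0"
    and "proper_coloring n E c0"
  shows "cqf_coeff n E k (content n c0) = (if k = asc E c0 then 1 else 0)"
proof -
  have "{c. proper_coloring n E c \<and> asc E c = k \<and> content n c = content n c0} = (if k = asc E c0 then {c0} else {})"
    using assms by auto
  thus ?thesis unfolding cqf_coeff_def by simp
qed


theorem corollary5p4:
  fixes n :: nat and E :: "nat set set" and A B :: "nat set"
  assumes "is_tree n E"
    and "even n"
    and "A \<union> B = {1..n}" and "A \<inter> B = {}"
    and "independent_set E A" and "independent_set E B"
    and "card A \<noteq> card B"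
  shows "\<not> cqf_palindromic n E \<and> \<not> cqf_symmetric n E"
proof -
  let ?N = "{1..n::nat}"
  note tr = assms(1)
  have n1: "n \<ge> 1" and cn: "graph_connected n E" using tr unfolding is_tree_def by auto
  have ei: "edges_in ?N E" using tr unfolding is_tree_def simple_graph_def edges_in_def by blast
  have adjN: "\<And>i j. adj E i j \<Longrightarrow> i \<in> ?N \<and> j \<in> ?N" using adj_in[OF ei] by blast
  have mE: "card E = n - 1" by (rule tree_card[OF tr])
  have odd: "odd (card E)" using mE assms(2) n1 by simp
  define c1 where "c1 = (\<lambda>i::nat. if i \<in> A then 1 else if i \<in> B then 2 else undefined :: nat)"
  define c2 where "c2 = (\<lambda>i::nat. if i \<in> A then 2 else if i \<in> B then 1 else undefined :: nat)"
  have AB: "\<And>i j. adj E i j \<Longrightarrow> (i \<in> A \<and> j \<in> B) \<or> (i \<in> B \<and> j \<in> A)"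
  proof -
    fix i j assume a: "adj E i j"
    hence "i \<in> A \<union> B" "j \<in> A \<union> B" using adjN assms(3) by auto
    moreover have "\<not> (i \<in> A \<and> j \<in> A)" "\<not> (i \<in> B \<and> j \<in> B)"
      using a assms(5,6) unfolding independent_set_def by auto
    ultimately show "(i \<in> A \<and> j \<in> B) \<or> (i \<in> B \<and> j \<in> A)" by auto
  qed
  have p1: "proper_coloring n E c1" unfolding proper_coloring_def
  proof
    show "c1 \<in> ?N \<rightarrow>\<^sub>E {1..}" unfolding c1_def using assms(3) by (auto simp: PiE_def extensional_def)
    show "\<forall>i j. adj E i j \<longrightarrow> c1 i \<noteq> c1 j"
    proof (intro allI impI)
      fix i j assume "adj E i j"
      from AB[OF this] assms(4) show "c1 i \<noteq> c1 j" unfolding c1_def by auto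
    qed
  qed
  have p2: "proper_coloring n E c2" unfolding proper_coloring_def
  proof
    show "c2 \<in> ?N \<rightarrow>\<^sub>E {1..}" unfolding c2_def using assms(3) by (auto simp: PiE_def extensional_def)
    show "\<forall>i j. adj E i j \<longrightarrow> c2 i \<noteq> c2 j"
    proof (intro allI impI)
      fix i j assume "adj E i j"
      from AB[OF this] assms(4) show "c2 i \<noteq> c2 j" unfolding c2_def by auto
    qed
  qed
  have v1: "\<forall>i\<in>?N. c1 i \<in> {1,2}" and v2: "\<forall>i\<in>?N. c2 i \<in> {1,2}" using assms(3) unfolding c1_def c2_def by auto
  have s11: "{i\<in>?N. c1 i = 1} = A" and s12: "{i\<in>?N. c1 i = 2} = B"
    and s21: "{i\<in>?N. c2 i = 1} = B" and s22: "{i\<in>?N. c2 i = 2} = A"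
    using assms(3,4) unfolding c1_def c2_def by auto
  have d1: "content n c1 1 \<noteq> content n c1 2" using s11 s12 assms(7) unfolding content_def by simp
  have d2: "content n c2 1 \<noteq> content n c2 2" using s21 s22 assms(7) unfolding content_def by simp
  have co1: "cqf_coeff n E k (content n c1) = (if k = asc E c1 then 1 else 0)" for k
    by (rule coeff_single[OF uniq_col[OF cn n1 adjN p1 v1 d1] p1])
  have co2: "cqf_coeff n E k (content n c2) = (if k = asc E c2 then 1 else 0)" for k
    by (rule coeff_single[OF uniq_col[OF cn n1 adjN p2 v2 d2] p2])
  define P where "P = {(i, j). {i, j} \<in> E \<and> i < j}"
  have cP: "card P = card E"
  proof -
    have "bij_betw (\<lambda>(i, j). {i, j}) P E"
    proof (rule bij_betwI')
      fix x y assume "x \<in> P" "y \<in> P"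
      thus "((case x of (i, j) \<Rightarrow> {i, j}) = (case y of (i, j) \<Rightarrow> {i, j})) = (x = y)"
        unfolding P_def by (auto simp: doubleton_eq_iff)
    next
      fix x assume "x \<in> P" thus "(case x of (i, j) \<Rightarrow> {i, j}) \<in> E" unfolding P_def by auto
    next
      fix e assume "e \<in> E"
      then obtain i j where ij: "e = {i, j}" "i \<noteq> j" using ei unfolding edges_in_def by blast
      show "\<exists>x\<in>P. e = (case x of (i, j) \<Rightarrow> {i, j})"
      proof (cases "i < j")
        case True thus ?thesis using ij \<open>e \<in> E\<close> unfolding P_def by auto
      next
        case False
        hence "j < i" using ij by simp
        have eq: "e = {j, i}" using ij by (simp add: insert_commute)
        hence "(j, i) \<in> P" using \<open>j < i\<close> \<open>e \<in> E\<close> unfolding P_def by simp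
        thus ?thesis using eq by force
      qed
    qed
    thus ?thesis by (rule bij_betw_same_card)
  qed
  have finP: "finite P"
  proof -
    have "P \<subseteq> ?N \<times> ?N"
    proof
      fix x assume "x \<in> P"
      then obtain i j where x: "x = (i, j)" "{i, j} \<in> E" "i < j" unfolding P_def by auto
      hence "adj E i j" unfolding adj_def by auto
      thus "x \<in> ?N \<times> ?N" using adjN x(1) by blast
    qed
    thus ?thesis by (rule finite_subset) simp
  qed
  have asc_sum: "asc E c1 + asc E c2 = card E"
  proof -
    let ?Q1 = "{(i, j). {i, j} \<in> E \<and> i < j \<and> c1 i < c1 j}"
    let ?Q2 = "{(i, j). {i, j} \<in> E \<and> i < j \<and> c2 i < c2 j}"
    have sub: "?Q1 \<subseteq> P" "?Q2 \<subseteq> P" unfolding P_def by auto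
    have un: "?Q1 \<union> ?Q2 = P"
    proof
      show "P \<subseteq> ?Q1 \<union> ?Q2"
      proof
        fix x assume "x \<in> P"
        then obtain i j where x: "x = (i, j)" "{i, j} \<in> E" "i < j" unfolding P_def by auto
        hence "adj E i j" unfolding adj_def by auto
        from AB[OF this] assms(4) show "x \<in> ?Q1 \<union> ?Q2" using x unfolding c1_def c2_def by auto
      qed
    qed (use sub in auto)
    have dj: "?Q1 \<inter> ?Q2 = {}"
    proof -
      { fix i j assume "(i, j) \<in> ?Q1" "(i, j) \<in> ?Q2"
        hence a: "adj E i j" and l: "c1 i < c1 j" "c2 i < c2 j" unfolding adj_def by auto
        from AB[OF a] have "(i \<in> A \<and> j \<in> B \<and> i \<notin> B \<and> j \<notin> A) \<or> (i \<in> B \<and> j \<in> A \<and> i \<notin> A \<and> j \<notin> B)"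
          using assms(4) by blast
        hence False using l unfolding c1_def c2_def by auto }
      thus ?thesis by auto
    qed
    have f1: "finite ?Q1" by (rule finite_subset[OF sub(1) finP])
    have f2: "finite ?Q2" by (rule finite_subset[OF sub(2) finP])
    have "card P = card ?Q1 + card ?Q2"
      using card_Un_disjoint[OF f1 f2 dj] un by simp
    thus ?thesis using cP unfolding asc_def by simp
  qed
  define k1 where "k1 = asc E c1"
  have k1le: "k1 \<le> card E" using asc_sum k1_def by simp
  have k2: "asc E c2 = card E - k1" using asc_sum k1_def by simp
  have neq: "card E - k1 \<noteq> k1" using odd k1le by presburger
  have np: "\<not> cqf_palindromic n E"
  proof
    assume "cqf_palindromic n E"
    hence "cqf_coeff n E k1 (content n c1) = cqf_coeff n E (card E - k1) (content n c1)"
      unfolding cqf_palindromic_def using k1le by blast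
    thus False using co1 neq k1_def by simp
  qed
  define \<sigma> where "\<sigma> = (\<lambda>x::nat. if x = 1 then 2 else if x = 2 then 1 else x)"
  have ss: "\<sigma> \<circ> \<sigma> = id" unfolding \<sigma>_def by (auto simp: fun_eq_iff)
  have bs: "bij \<sigma>" by (rule o_bij[OF ss ss])
  have s0: "\<sigma> 0 = 0" unfolding \<sigma>_def by simp
  have cc: "content n c2 \<circ> \<sigma> = content n c1"
  proof
    fix a
    have "{i\<in>?N. c2 i = \<sigma> a} = {i\<in>?N. c1 i = a}"
      using assms(3,4) unfolding c1_def c2_def \<sigma>_def by auto
    thus "(content n c2 \<circ> \<sigma>) a = content n c1 a" unfolding content_def by simp
  qed
  have ns: "\<not> cqf_symmetric n E"
  proof
    assume "cqf_symmetric n E"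
    hence "cqf_coeff n E k1 (content n c2 \<circ> \<sigma>) = cqf_coeff n E k1 (content n c2)"
      unfolding cqf_symmetric_def using bs s0 by blast
    thus False using co1 co2 cc k2 neq k1_def by simp
  qed
  show ?thesis using np ns by simp
qed

end
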